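(* Let $U$ be a Hilbert space, $\widetilde H_{i+1}: U\rightrightarrows U$, and $M_{i+1}, Z_{i+1}\in\mathcal{L}(U;U)$ with $Z_{i+1}M_{i+1}$ self-adjoint, positive definite and invertible. Let $u^i, u^{i+1}\in U$ satisfy $0\in\widetilde H_{i+1}(u^{i+1}) + M_{i+1}(u^{i+1}-u^i)$. Then \[ \tfrac12\|u^{i+1}-u^i\|^2_{Z_{i+1}M_{i+1}} \ge \tfrac12\operatorname{dist}^2_{Z_{i+1}^*(Z_{i+1}M_{i+1})^{-1}Z_{i+1}}\big(0, \widetilde H_{i+1}(u^{i+1})\big). \]
   Context: For $T\in\mathcal{L}(U;U)$: $\|x\|_T^2:=\langle Tx,x\rangle$ and $\operatorname{dist}^2_T(z,A):=\inf_{u\in A}\|z-u\|_T^2$. *)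

theory Defs
  imports "HOL-Analysis.Analysis"
begin

definition sqnormT :: "('a::real_inner \<Rightarrow> 'a) \<Rightarrow> 'a \<Rightarrow> real" where
  "sqnormT T x = inner (T x) x"

definition distT2 :: "('a::real_inner \<Rightarrow> 'a) \<Rightarrow> 'a \<Rightarrow> 'a set \<Rightarrow> real" where
  "distT2 T z A = (INF u\<in>A. sqnormT T (z - u))"

definition self_adjoint_op :: "('a::real_inner \<Rightarrow> 'a) \<Rightarrow> bool" where
  "self_adjoint_op T \<longleftrightarrow> (\<forall>x y. inner (T x) y = inner x (T y))"

definition pos_def_op :: "('a::real_inner \<Rightarrow> 'a) \<Rightarrow> bool" where
  "pos_def_op T \<longleftrightarrow> (\<forall>x. x \<noteq> 0 \<longrightarrow> inner (T x) x > 0)"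

end

theory Submission
  imports Defs
begin

lemma parallelogram_aux:
  fixes a b :: "'a::real_inner"
  shows "norm (a - b)^2 = 2 * norm a ^2 + 2 * norm b ^2 - 4 * norm ((1/2) *\<^sub>R (a + b))^2"
  by (simp add: power2_norm_eq_inner inner_simps inner_commute algebra_simps)

lemma riesz_rep:
  fixes f :: "'a::{real_inner, complete_space} \<Rightarrow> real"
  assumes bl: "bounded_linear f"
  shows "\<exists>y. \<forall>x. f x = inner x y"
proof (cases "\<forall>x. f x = 0")
  case True
  then show ?thesis by (intro exI[of _ 0]) simp
next
  case False
  interpret f: bounded_linear f by fact
  obtain x0 where x0: "f x0 \<noteq> 0" using False by blast
  define x1 where "x1 = (1 / f x0) *\<^sub>R x0"
  have fx1: "f x1 = 1" using x0 by (simp add: x1_def f.scale)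
  define S where "S = {x. f x = 1}"
  define d where "d = Inf ((\<lambda>x. norm x ^ 2) ` S)"
  have Sne: "(\<lambda>x. norm x ^ 2) ` S \<noteq> {}" using fx1 S_def by auto
  have bdd: "bdd_below ((\<lambda>x. norm x ^ 2) ` S)"
    by (rule bdd_belowI[of _ 0]) auto
  have dle: "d \<le> norm x ^ 2" if "x \<in> S" for x
    unfolding d_def using bdd that by (auto intro: cInf_lower)
  have "\<exists>x. x \<in> S \<and> norm x ^ 2 < d + 1 / real (Suc n)" for n
  proof -
    have "Inf ((\<lambda>x. norm x ^ 2) ` S) < d + 1 / real (Suc n)" unfolding d_def by simp
    from cInf_lessD[OF Sne this] show ?thesis by auto
  qed
  then obtain X where X: "\<And>n. X n \<in> S" "\<And>n. norm (X n) ^ 2 < d + 1 / real (Suc n)"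
    by metis
  have mid: "(1/2) *\<^sub>R (a + b) \<in> S" if "a \<in> S" "b \<in> S" for a b
    using that by (simp add: S_def f.scale f.add)
  have dist_bound: "norm (X m - X n)^2 \<le> 2 / real (Suc m) + 2 / real (Suc n)" for m n
  proof -
    have "d \<le> norm ((1/2) *\<^sub>R (X m + X n))^2" by (rule dle[OF mid[OF X(1) X(1)]])
    then show ?thesis using parallelogram_aux[of "X m" "X n"] X(2)[of m] X(2)[of n] by linarith
  qed
  have "Cauchy X"
  proof (rule metric_CauchyI)
    fix e :: real assume e: "e > 0"
    obtain N where N: "4 / e^2 < real (Suc N)"
      using reals_Archimedean2 by (metis less_Suc_eq of_nat_less_iff order.strict_trans)
    have N': "4 / real (Suc N) < e^2"
      using N e by (simp add: field_simps)
    show "\<exists>M. \<forall>m\<ge>M. \<forall>n\<ge>M. dist (X m) (X n) < e"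
    proof (intro exI allI impI)
      fix m n assume mn: "N \<le> m" "N \<le> n"
      have "2 / real (Suc m) \<le> 2 / real (Suc N)" using mn by (simp add: frac_le)
      moreover have "2 / real (Suc n) \<le> 2 / real (Suc N)" using mn by (simp add: frac_le)
      ultimately have "norm (X m - X n)^2 < e^2" using dist_bound[of m n] N' by linarith
      then have "norm (X m - X n) < e" using e by (simp add: power_less_imp_less_base)
      then show "dist (X m) (X n) < e" by (simp add: dist_norm)
    qed
  qed
  then obtain y0 where lim: "X \<longlonglongrightarrow> y0" using Cauchy_convergent_iff convergent_def by blast
  have "(\<lambda>n. f (X n)) \<longlonglongrightarrow> f y0" by (rule f.tendsto[OF lim])
  moreover have "(\<lambda>n. f (X n)) = (\<lambda>n. 1)" using X(1) by (simp add: S_def)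
  ultimately have fy0: "f y0 = 1" using LIMSEQ_unique tendsto_const by metis
  have "(\<lambda>n. norm (X n) ^ 2) \<longlonglongrightarrow> norm y0 ^ 2"
    by (intro tendsto_intros lim)
  moreover have "(\<lambda>n. d + 1 / real (Suc n)) \<longlonglongrightarrow> d + 0"
    by (intro tendsto_intros LIMSEQ_inverse_real_of_nat[unfolded inverse_eq_divide])
  ultimately have "norm y0 ^ 2 \<le> d + 0"
    by (rule LIMSEQ_le) (use X(2) less_imp_le in blast)
  then have ymin: "norm y0 ^ 2 \<le> norm x ^ 2" if "x \<in> S" for x using dle[OF that] by linarith
  have orth: "inner y0 k = 0" if fk: "f k = 0" for k
  proof -
    have ineq: "0 \<le> 2 * t * inner y0 k + t^2 * inner k k" for t
    proof -
      have "y0 + t *\<^sub>R k \<in> S" using fy0 fk by (simp add: S_def f.add f.scale)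
      from ymin[OF this] have "inner y0 y0 \<le> inner (y0 + t *\<^sub>R k) (y0 + t *\<^sub>R k)"
        by (simp add: power2_norm_eq_inner)
      then show ?thesis
        by (simp add: inner_simps inner_commute algebra_simps power2_eq_square)
    qed
    show ?thesis
    proof (cases "k = 0")
      case True then show ?thesis by simp
    next
      case False
      then have b: "inner k k > 0" by simp
      have "0 \<le> 2 * (- inner y0 k / inner k k) * inner y0 k + (- inner y0 k / inner k k)^2 * inner k k"
        by (rule ineq)
      also have "\<dots> = - ((inner y0 k)^2 / inner k k)"
        using b by (simp add: field_simps power2_eq_square)
      finally have "(inner y0 k)^2 / inner k k \<le> 0" by simp
      then have "(inner y0 k)^2 \<le> 0" using b
        by (simp add: divide_le_0_iff)
      then show ?thesis by simp
    qed
  qed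
  have y0nz: "y0 \<noteq> 0" using fy0 f.zero by auto
  show ?thesis
  proof (intro exI allI)
    fix x
    have "f (x - f x *\<^sub>R y0) = 0" using fy0 by (simp add: f.diff f.scale)
    from orth[OF this] have "inner y0 x = f x * inner y0 y0" by (simp add: inner_simps)
    then show "f x = inner x ((1 / inner y0 y0) *\<^sub>R y0)"
      using y0nz by (simp add: inner_commute field_simps)
  qed
qed

lemma adjoint_works_hilbert:
  fixes Z :: "'a::{real_inner, complete_space} \<Rightarrow> 'a"
  assumes "bounded_linear Z"
  shows "inner (Z x) y = inner x (adjoint Z y)"
proof -
  have "\<exists>g. \<forall>x. inner (Z x) y = inner x g" for y
    by (rule riesz_rep) (intro bounded_linear_inner_left_comp assms)
  then have "\<exists>g. \<forall>y x. inner (Z x) y = inner x (g y)" by metis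
  then have "\<exists>g. \<forall>x y. inner (Z x) y = inner x (g y)" by blast
  then have "\<forall>x y. inner (Z x) y = inner x (adjoint Z y)"
    unfolding adjoint_def by (rule someI_ex)
  then show ?thesis by blast
qed

theorem lemma3p13:
  fixes H :: "'a::{real_inner, complete_space} \<Rightarrow> 'a set"
    and M Z :: "'a \<Rightarrow> 'a"
    and u u' :: 'a
  assumes "bounded_linear M" and "bounded_linear Z"
    and "self_adjoint_op (Z \<circ> M)"
    and "pos_def_op (Z \<circ> M)"
    and "bij (Z \<circ> M)"
    and "bounded_linear (inv (Z \<circ> M))"
    and "0 \<in> (\<lambda>h. h + M (u' - u)) ` H u'"
  shows "(1/2) * sqnormT (Z \<circ> M) (u' - u)
           \<ge> (1/2) * distT2 (adjoint Z \<circ> inv (Z \<circ> M) \<circ> Z) 0 (H u')"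
proof -
  define A where "A = Z \<circ> M"
  define B where "B = inv A"
  have AB: "A (B y) = y" for y using assms(5) unfolding A_def B_def by (meson bij_is_surj surj_f_inv_f)
  have BA: "B (A x) = x" for x using assms(5) unfolding A_def B_def by (metis bij_is_inj inv_f_f comp_apply)
  have adj: "inner (Z x) y = inner x (adjoint Z y)" for x y
    by (rule adjoint_works_hilbert[OF assms(2)])
  define T where "T = adjoint Z \<circ> inv (Z \<circ> M) \<circ> Z"
  have sqT: "sqnormT T x = inner (A (B (Z x))) (B (Z x))" for x
    unfolding sqnormT_def T_def A_def[symmetric] B_def[symmetric]
    by (simp add: AB adj[symmetric] inner_commute)
  have nonneg: "0 \<le> sqnormT T x" for x
  proof -
    have "0 \<le> inner (A w) w" for w
      using assms(4) unfolding pos_def_op_def A_def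
      by (cases "w = 0") (auto simp: less_imp_le)
    then show ?thesis by (simp add: sqT)
  qed
  obtain h0 where h0: "h0 \<in> H u'" "0 = h0 + M (u' - u)" using assms(7) by blast
  have key: "sqnormT T (0 - h0) = sqnormT A (u' - u)"
  proof -
    have "0 - h0 = M (u' - u)" using h0(2) by (metis add_implies_diff diff_0 minus_diff_eq)
    then have "Z (0 - h0) = A (u' - u)" by (simp add: A_def)
    then have "sqnormT T (0 - h0) = inner (A (u' - u)) (u' - u)" by (simp only: sqT BA)
    then show ?thesis by (simp add: sqnormT_def)
  qed
  have "distT2 T 0 (H u') \<le> sqnormT T (0 - h0)"
    unfolding distT2_def
    by (rule cINF_lower[OF _ h0(1)]) (auto intro: bdd_belowI[of _ 0] nonneg)
  then show ?thesis using key unfolding T_def A_def by simp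
qed

end
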